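(* Consider Algorithm B on an input whose optimal offline makespan is $1$. Then at most one job is handled by Step 4, and if some job is handled by Step 4, then every job arriving after it is handled by Step 2 or Step 3.
   Context: Model (two hierarchical machines with migration). Jobs $1,2,\dots,n$ arrive one by one. Job $j$ has a size $p_j>0$ and a grade of service (GoS) $g_j\in\{1,2\}$; a job of GoS $1$ may only be processed on machine $m_1$, a job of GoS $2$ on $m_1$ or $m_2$. When job $j$ arrives, the algorithm assigns it and may migrate previously arrived jobs of total size at most $M\cdot p_j$. Bin stretching: the optimal offline makespan of the complete input is $1$ and is known in advance. Notation: $Y_{j}$ is the set of jobs on $m_2$ just after job $j$ has been handled (including migrations), $y_j$ its total size, $y_0=0$. $p^{\max Y}_j$ and $p^{\max Y,2}_j$ are the largest and second largest sizes of jobs in $Y_{j-1}$ (each defined as $0$ if it does not exist), and $j^{\max Y}$ is a job of $Y_{j-1}$ of size $p^{\max Y}_j$. "Sorted $Y_{j-1}$" means the jobs of $Y_{j-1}$ listed in non-increasing order of size; $w_j$ denotes the total size of the set $W$ chosen when handling $j$. Algorithm B. On arrival of job $j$: Step 2: if $g_j=1$ or $y_{j-1}\ge 0.75$, assign $j$ to $m_1$. Step 3: else if $y_{j-1}+p_j\le 1.25$, assign $j$ to $m_2$. Step 4: else if $p_j\ge 0.75$: let $W$ be the longest prefix of sorted $Y_{j-1}$ with total size at most $0.75p_j$ (possibly empty). If $y_{j-1}-w_j+p_j>1.25$, assign $j$ to $m_1$ (no migration); otherwise migrate the jobs of $W$ to $m_1$ and assign $j$ to $m_2$. Step 5: else (so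 $p_j<0.75$): if $p_j+p^{\max Y}_j>1.25$, assign $j$ to $m_1$. Otherwise choose $W$ as follows: if $p^{\max Y}_j\ge y_{j-1}/2$, let $W=Y_{j-1}\setminus\{j^{\max Y}\}$; if $0.25\le p^{\max Y}_j<y_{j-1}/2$, let $W=\{j^{\max Y}\}$; if $p^{\max Y}_j<0.25$, let $W$ be the shortest prefix of sorted $Y_{j-1}$ with total size at least $0.25$ (or all of $Y_{j-1}$ if none exists), and if then $w_j>0.75p_j$ replace $W$ by $Y_{j-1}\setminus W$. Migrate the jobs of $W$ to $m_1$ and assign $j$ to $m_2$. *)

theory Defs
  imports Complex_Main
begin

text \<open>Jobs are indexed 1..n; p j is the size, g j the grade of service (1 or 2).
  A schedule of the whole input is described by the set S of jobs on machine m2.\<close>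

definition feasible_assignment :: "nat \<Rightarrow> (nat \<Rightarrow> nat) \<Rightarrow> nat set \<Rightarrow> bool" where
  "feasible_assignment n g S \<longleftrightarrow> S \<subseteq> {1..n} \<and> (\<forall>j\<in>S. g j = 2)"

definition makespan :: "nat \<Rightarrow> (nat \<Rightarrow> real) \<Rightarrow> nat set \<Rightarrow> real" where
  "makespan n p S = max (sum p ({1..n} - S)) (sum p S)"

definition opt_makespan :: "nat \<Rightarrow> (nat \<Rightarrow> real) \<Rightarrow> (nat \<Rightarrow> nat) \<Rightarrow> real" where
  "opt_makespan n p g = Min {makespan n p S | S. feasible_assignment n g S}"

definition sorted_listing :: "(nat \<Rightarrow> real) \<Rightarrow> nat set \<Rightarrow> nat list \<Rightarrow> bool" where
  "sorted_listing p Y xs \<longleftrightarrow> distinct xs \<and> set xs = Y \<and> sorted_wrt (\<lambda>a b. p a \<ge> p b) xs"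

definition psum :: "(nat \<Rightarrow> real) \<Rightarrow> nat list \<Rightarrow> nat \<Rightarrow> real" where
  "psum p xs k = sum_list (map p (take k xs))"

definition pmaxY :: "(nat \<Rightarrow> real) \<Rightarrow> nat set \<Rightarrow> real" where
  "pmaxY p Y = (if Y = {} then 0 else Max (p ` Y))"

definition step5_W :: "(nat \<Rightarrow> real) \<Rightarrow> nat \<Rightarrow> nat set \<Rightarrow> nat set \<Rightarrow> bool" where
  "step5_W p j Y W \<longleftrightarrow>
     (let y = sum p Y; pm = pmaxY p Y in
      (pm \<ge> y / 2 \<and> (\<exists>jm\<in>Y. p jm = pm \<and> W = Y - {jm})) \<or>
      (1/4 \<le> pm \<and> pm < y / 2 \<and> (\<exists>jm\<in>Y. p jm = pm \<and> W = {jm})) \<or>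
      (pm < 1/4 \<and> (\<exists>xs k W0. sorted_listing p Y xs \<and> k \<le> length xs \<and>
            (psum p xs k \<ge> 1/4 \<or> k = length xs) \<and> (\<forall>k'<k. psum p xs k' < 1/4) \<and>
            W0 = set (take k xs) \<and>
            W = (if sum p W0 > 3/4 * p j then Y - W0 else W0))))"

text \<open>alg_step p g j Y Y' s: job j, with Y = Y_{j-1}, is handled by Step s of Algorithm B,
  and afterwards the set of jobs on m2 is Y'.  Tie-breaking is arbitrary.\<close>
definition alg_step :: "(nat \<Rightarrow> real) \<Rightarrow> (nat \<Rightarrow> nat) \<Rightarrow> nat \<Rightarrow> nat set \<Rightarrow> nat set \<Rightarrow> nat \<Rightarrow> bool" where
  "alg_step p g j Y Y' s \<longleftrightarrow>
     (let y = sum p Y in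
      (s = 2 \<and> (g j = 1 \<or> y \<ge> 3/4) \<and> Y' = Y) \<or>
      (s = 3 \<and> \<not> (g j = 1 \<or> y \<ge> 3/4) \<and> y + p j \<le> 5/4 \<and> Y' = insert j Y) \<or>
      (s = 4 \<and> \<not> (g j = 1 \<or> y \<ge> 3/4) \<and> \<not> (y + p j \<le> 5/4) \<and> p j \<ge> 3/4 \<and>
         (\<exists>xs k. sorted_listing p Y xs \<and> k \<le> length xs \<and> psum p xs k \<le> 3/4 * p j \<and>
            (\<forall>k'. k' \<le> length xs \<and> psum p xs k' \<le> 3/4 * p j \<longrightarrow> k' \<le> k) \<and>
            (let W = set (take k xs) in
              if y - sum p W + p j > 5/4 then Y' = Y else Y' = insert j (Y - W)))) \<or>
      (s = 5 \<and> \<not> (g j = 1 \<or> y \<ge> 3/4) \<and> \<not> (y + p j \<le> 5/4) \<and> \<not> (p j \<ge> 3/4) \<and>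
         (if p j + pmaxY p Y > 5/4 then Y' = Y
          else (\<exists>W. step5_W p j Y W \<and> Y' = insert j (Y - W)))))"

text \<open>A run of Algorithm B on jobs 1..n: Ys j = Y_j, st j = step handling job j.\<close>
definition alg_run :: "nat \<Rightarrow> (nat \<Rightarrow> real) \<Rightarrow> (nat \<Rightarrow> nat) \<Rightarrow> (nat \<Rightarrow> nat set) \<Rightarrow> (nat \<Rightarrow> nat) \<Rightarrow> bool" where
  "alg_run n p g Ys st \<longleftrightarrow> Ys 0 = {} \<and>
     (\<forall>j\<in>{1..n}. alg_step p g j (Ys (j - 1)) (Ys j) (st j))"

end

theory Submission
  imports Defs
begin

lemma step_sub: "alg_step p g j Y Y' s \<Longrightarrow> Y' \<subseteq> insert j Y"
  unfolding alg_step_def Let_def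
  by (elim disjE conjE exE; (split if_split_asm)?; blast)
lemma step4: "alg_step p g j Y Y' 4 \<Longrightarrow> p j \<ge> 3/4 \<and> (Y' = Y \<or> (\<exists>W. Y' = insert j (Y - W)))"
  unfolding alg_step_def Let_def
  by (elim disjE conjE exE; (split if_split_asm)?; (simp; blast))
lemma step_big: "alg_step p g j Y Y' s \<Longrightarrow> sum p Y \<ge> 3/4 \<Longrightarrow> s = 2 \<and> Y' = Y"
  unfolding alg_step_def Let_def by blast

lemma step_small: "alg_step p g j Y Y' s \<Longrightarrow> sum p Y + p j \<le> 5/4 \<Longrightarrow>
   (s = 2 \<and> Y' = Y) \<or> (s = 3 \<and> Y' = insert j Y)"
  unfolding alg_step_def Let_def by auto

theorem mainTheorem7:
  fixes n :: nat and p :: "nat \<Rightarrow> real" and g :: "nat \<Rightarrow> nat"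
    and Ys :: "nat \<Rightarrow> nat set" and st :: "nat \<Rightarrow> nat"
  assumes pos: "\<forall>j\<in>{1..n}. p j > 0"
    and gos: "\<forall>j\<in>{1..n}. g j \<in> {1, 2}"
    and opt: "opt_makespan n p g = 1"
    and run: "alg_run n p g Ys st"
  shows "card {j\<in>{1..n}. st j = 4} \<le> 1
    \<and> (\<forall>j\<in>{1..n}. st j = 4 \<longrightarrow> (\<forall>k\<in>{j<..n}. st k = 2 \<or> st k = 3))"
proof -
  have Y0: "Ys 0 = {}" and steps: "\<And>j. j \<in> {1..n} \<Longrightarrow> alg_step p g j (Ys (j - 1)) (Ys j) (st j)"
    using run unfolding alg_run_def by auto
  have nn: "\<And>i. i \<in> {1..n} \<Longrightarrow> p i \<ge> 0" using pos by (simp add: less_imp_le)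
  have total: "sum p {1..n} \<le> 2"
  proof -
    let ?A = "{makespan n p S | S. feasible_assignment n g S}"
    have "?A = (\<lambda>S. makespan n p S) ` {S. feasible_assignment n g S}" by auto
    moreover have "finite {S. feasible_assignment n g S}"
      by (rule finite_subset[of _ "Pow {1..n}"]) (auto simp: feasible_assignment_def)
    ultimately have fin: "finite ?A" by simp
    have "makespan n p {} \<in> ?A" by (auto simp: feasible_assignment_def)
    hence "?A \<noteq> {}" by blast
    from Min_in[OF fin this] opt obtain S where S: "feasible_assignment n g S" "makespan n p S = 1"
      unfolding opt_makespan_def by auto
    have Ssub: "S \<subseteq> {1..n}" using S(1) by (simp add: feasible_assignment_def)
    have "sum p {1..n} = sum p ({1..n} - S) + sum p S"
      using sum.subset_diff[OF Ssub] by simp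
    moreover have "sum p ({1..n} - S) \<le> 1" "sum p S \<le> 1" using S(2) by (auto simp: makespan_def)
    ultimately show ?thesis by linarith
  qed
  have sub: "\<And>i. i \<le> n \<Longrightarrow> Ys i \<subseteq> {1..i}"
  proof -
    fix i show "i \<le> n \<Longrightarrow> Ys i \<subseteq> {1..i}"
    proof (induction i)
      case 0 then show ?case using Y0 by simp
    next
      case (Suc i)
      have "alg_step p g (Suc i) (Ys i) (Ys (Suc i)) (st (Suc i))" using steps[of "Suc i"] Suc.prems by simp
      from step_sub[OF this] Suc have "Ys (Suc i) \<subseteq> insert (Suc i) {1..i}" by auto
      then show ?case by auto
    qed
  qed
  have after: "\<forall>j\<in>{1..n}. st j = 4 \<longrightarrow> (\<forall>k\<in>{j<..n}. st k = 2 \<or> st k = 3)"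
  proof (intro ballI impI)
    fix j k assume j: "j \<in> {1..n}" and s4: "st j = 4" and k: "k \<in> {j<..n}"
    have sj: "alg_step p g j (Ys (j - 1)) (Ys j) 4" using steps[OF j] s4 by simp
    from step4[OF this] have pj: "p j \<ge> 3/4" and cs: "Ys j = Ys (j - 1) \<or> (\<exists>W. Ys j = insert j (Ys (j - 1) - W))"
      by auto
    have prev: "Ys (j - 1) \<subseteq> {1..j-1}" by (rule sub) (use j in auto)
    have "{1..j-1} \<subseteq> {1..j} - {j}" by auto
    with prev have prev2: "Ys (j - 1) \<subseteq> {1..j} - {j}" by blast
    have nnp: "\<And>x. x \<in> Ys (j - 1) \<Longrightarrow> p x \<ge> 0"
    proof -
      fix x assume "x \<in> Ys (j - 1)"
      hence "x \<in> {1..j-1}" using prev by blast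
      hence "x \<in> {1..n}" using j by auto
      thus "p x \<ge> 0" by (rule nn)
    qed
    obtain m where km: "k = j + m" "m > 0" using k by (metis add_diff_inverse_nat greaterThanAtMost_iff less_imp_add_positive not_less_iff_gr_or_eq)
    show "st k = 2 \<or> st k = 3"
    proof (cases "Ys j = Ys (j - 1)")
      case False
      then obtain W where W: "Ys j = insert j (Ys (j - 1) - W)" using cs by auto
      have fin: "finite (Ys (j - 1) - W)" using prev finite_subset by blast
      have jn: "j \<notin> Ys (j - 1) - W" using prev j by auto
      have "sum p (Ys j) = p j + sum p (Ys (j - 1) - W)" using W sum.insert[OF fin jn] by simp
      moreover have "sum p (Ys (j - 1) - W) \<ge> 0"
        by (rule sum_nonneg) (use nnp in auto)
      ultimately have big: "sum p (Ys j) \<ge> 3/4" using pj by linarith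
      have "\<forall>m. j + m \<le> n \<longrightarrow> Ys (j + m) = Ys j \<and> (m > 0 \<longrightarrow> st (j + m) = 2)"
      proof
        fix m show "j + m \<le> n \<longrightarrow> Ys (j + m) = Ys j \<and> (m > 0 \<longrightarrow> st (j + m) = 2)"
        proof (induction m)
          case 0 then show ?case by simp
        next
          case (Suc m)
          show ?case
          proof
            assume le: "j + Suc m \<le> n"
            hence IH: "Ys (j + m) = Ys j" using Suc.IH by simp
            have "alg_step p g (j + Suc m) (Ys (j + m)) (Ys (j + Suc m)) (st (j + Suc m))"
              using steps[of "j + Suc m"] le by simp
            from step_big[OF this] IH big show "Ys (j + Suc m) = Ys j \<and> (Suc m > 0 \<longrightarrow> st (j + Suc m) = 2)"
              by simp
          qed
        qed
      qed
      then show ?thesis using km k by auto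
    next
      case True
      have "\<forall>m. j + m \<le> n \<longrightarrow> Ys (j + m) \<subseteq> {1..j+m} - {j} \<and> (m > 0 \<longrightarrow> st (j + m) = 2 \<or> st (j + m) = 3)"
      proof
        fix m show "j + m \<le> n \<longrightarrow> Ys (j + m) \<subseteq> {1..j+m} - {j} \<and> (m > 0 \<longrightarrow> st (j + m) = 2 \<or> st (j + m) = 3)"
        proof (induction m)
          case 0 then show ?case using True prev2 by simp
        next
          case (Suc m)
          show ?case
          proof
            assume le: "j + Suc m \<le> n"
            hence IH: "Ys (j + m) \<subseteq> {1..j+m} - {j}" using Suc.IH by simp
            let ?k = "j + Suc m" and ?Y = "Ys (j + m)"
            have stp: "alg_step p g ?k ?Y (Ys ?k) (st ?k)"
              using steps[of "j + Suc m"] le by simp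
            have finY: "finite ?Y" using IH finite_subset by blast
            have jY: "j \<notin> ?Y" using IH by blast
            have kY: "?k \<notin> insert j ?Y"
            proof
              assume "?k \<in> insert j ?Y"
              moreover have "?k \<noteq> j" by simp
              ultimately have "?k \<in> {1..j+m}" using IH by blast
              thus False by simp
            qed
            have "sum p (insert ?k (insert j ?Y)) = p ?k + (p j + sum p ?Y)"
              using jY kY finY by simp
            moreover have "sum p (insert ?k (insert j ?Y)) \<le> sum p {1..n}"
              by (rule sum_mono2) (use IH le j nn in auto)
            ultimately have "sum p ?Y + p ?k \<le> 5/4" using total pj by linarith
            from step_small[OF stp this] IH
            show "Ys ?k \<subseteq> {1..?k} - {j} \<and> (Suc m > 0 \<longrightarrow> st ?k = 2 \<or> st ?k = 3)"
              by auto
          qed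
        qed
      qed
      then show ?thesis using km k by auto
    qed
  qed
  have "card {j\<in>{1..n}. st j = 4} \<le> Suc 0"
  proof (subst card_le_Suc0_iff_eq, simp, intro ballI)
    fix a b assume a: "a \<in> {j\<in>{1..n}. st j = 4}" and b: "b \<in> {j\<in>{1..n}. st j = 4}"
    show "a = b"
    proof (rule ccontr)
      assume "a \<noteq> b"
      then consider "a < b" | "b < a" by linarith
      then show False
        using after a b by cases force+
    qed
  qed
  then show ?thesis using after by simp
qed

end
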